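(* Let $n\ge1$ and $M\le N$ be integers. For each chain (totally ordered subset) $C$ of pure diagrams lying in $B_{M,N}$, let $\sigma_C=\{\sum_{\pi\in C}\lambda_\pi\pi:\lambda_\pi\ge0\}\subseteq B_{M,N}$. The cones $\sigma_C$ form a simplicial fan; in particular, any element of $B_{M,N}$ that can be written as a linear combination with strictly positive coefficients of the elements of some chain of pure diagrams in $B_{M,N}$ can be written so in exactly one way (the chain and the coefficients are uniquely determined).
   Context: $B_{M,N}$ is the $\mathbb Q$-vector space of arrays $\beta=(\beta_{i,j})$ indexed by $0\le i\le n$, $j\in\mathbb Z$, with $\beta_{i,j}=0$ unless $M+i\le j\le N+i$. For integers $d_0<d_1<\dots<d_t$ with $0\le t\le n$, the pure diagram $\pi(d_0,\dots,d_t)$ is the array whose entry in position $(i,d_i)$ is $(-1)^i\prod_{0\le j\le t,\,j\ne i}\frac{1}{d_j-d_i}$ for $i=0,\dots,t$, and whose other entries are $0$; its codimension is $t$. It lies in $B_{M,N}$ iff $M+i\le d_i\le N+i$ for all $i$. Partial order: $\pi(d_0,\dots,d_t)\le\pi(d'_0,\dots,d'_u)$ iff $t\ge u$ and $d_i\le d'_i$ for $i=0,\dots,u$. *)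

theory Defs
  imports Complex_Main
begin

text \<open>Arrays beta = (beta_{i,j}), i \<in> {0..n}, j \<in> int, rational entries,
  represented as functions nat \<Rightarrow> int \<Rightarrow> rat (zero outside the index range).\<close>

type_synonym diagram = "nat \<Rightarrow> int \<Rightarrow> rat"

definition in_B :: "nat \<Rightarrow> int \<Rightarrow> int \<Rightarrow> diagram \<Rightarrow> bool" where
  "in_B n M N beta \<longleftrightarrow>
     (\<forall>i j. beta i j \<noteq> 0 \<longrightarrow> i \<le> n \<and> M + int i \<le> j \<and> j \<le> N + int i)"

definition degseq :: "nat \<Rightarrow> int list \<Rightarrow> bool" where
  "degseq n d \<longleftrightarrow> d \<noteq> [] \<and> length d \<le> n + 1 \<and> sorted_wrt (<) d"

definition pure :: "int list \<Rightarrow> diagram" where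
  "pure d = (\<lambda>i j. if i < length d \<and> j = d ! i
      then (-1) ^ i * (\<Prod>k \<in> {0..<length d} - {i}. 1 / of_int (d ! k - d ! i))
      else 0)"

text \<open>pi(d) lies in B_{M,N} iff M+i \<le> d_i \<le> N+i for all i.\<close>
definition pure_in_B :: "nat \<Rightarrow> int \<Rightarrow> int \<Rightarrow> int list \<Rightarrow> bool" where
  "pure_in_B n M N d \<longleftrightarrow> degseq n d \<and> in_B n M N (pure d)"

definition pure_le :: "int list \<Rightarrow> int list \<Rightarrow> bool" where
  "pure_le d d' \<longleftrightarrow> length d \<ge> length d' \<and> (\<forall>i < length d'. d ! i \<le> d' ! i)"

text \<open>A chain of pure diagrams in B_{M,N}, indexed by their degree sequences.\<close>
definition is_chain :: "nat \<Rightarrow> int \<Rightarrow> int \<Rightarrow> int list set \<Rightarrow> bool" where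
  "is_chain n M N C \<longleftrightarrow> (\<forall>d \<in> C. pure_in_B n M N d) \<and>
     (\<forall>d \<in> C. \<forall>d' \<in> C. pure_le d d' \<or> pure_le d' d)"

definition comb :: "int list set \<Rightarrow> (int list \<Rightarrow> rat) \<Rightarrow> diagram" where
  "comb C lam = (\<lambda>i j. \<Sum>d \<in> C. lam d * pure d i j)"

definition cone :: "int list set \<Rightarrow> diagram set" where
  "cone C = {comb C lam | lam. \<forall>d \<in> C. lam d \<ge> 0}"

end

theory Submission
  imports Defs
begin

lemma pure_pos:
  assumes s: "sorted_wrt (<) d" and i: "i < length d"
  shows "pure d i (d!i) > 0"
proof -
  let ?f = "\<lambda>k. 1 / of_int (d!k - d!i) :: rat"
  define S where "S = {0..<length d} - {i}"
  have S: "S = {..<i} \<union> {i<..<length d}" using i unfolding S_def by auto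
  have ne: "\<And>k. k \<in> S \<Longrightarrow> d!k \<noteq> d!i"
    using s i unfolding S_def
    by (metis Diff_iff atLeastLessThan_iff insertI1 linorder_neqE_nat order_less_irrefl sorted_wrt_nth_less)
  have pt: "\<And>k. k \<in> S \<Longrightarrow> ?f k = (if k < i then -1 else 1) * \<bar>?f k\<bar>"
  proof -
    fix k assume k: "k \<in> S"
    show "?f k = (if k < i then -1 else 1) * \<bar>?f k\<bar>"
    proof (cases "k < i")
      case True
      then have "d!k < d!i" using s i by (simp add: sorted_wrt_nth_less)
      then show ?thesis using True by (simp add: abs_if)
    next
      case False
      then have "k > i" "k < length d" using k unfolding S_def by auto
      then have "d!i < d!k" using s by (simp add: sorted_wrt_nth_less)
      then show ?thesis using False by simp
    qed
  qed
  have "prod ?f S = (\<Prod>k\<in>S. (if k < i then -1 else 1)) * (\<Prod>k\<in>S. \<bar>?f k\<bar>)"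
    unfolding prod.distrib[symmetric] by (rule prod.cong[OF refl pt])
  also have "(\<Prod>k\<in>S. (if k < i then -1 else 1::rat)) = (-1)^i"
  proof -
    have "(\<Prod>k\<in>S. (if k < i then -1 else 1::rat)) =
      (\<Prod>k\<in>{..<i}. (if k < i then -1 else 1)) * (\<Prod>k\<in>{i<..<length d}. (if k < i then -1 else 1))"
      unfolding S by (rule prod.union_disjoint) auto
    also have "\<dots> = (-1)^i" by simp
    finally show ?thesis .
  qed
  finally have eq: "prod ?f S = (-1)^i * (\<Prod>k\<in>S. \<bar>?f k\<bar>)" .
  have pos: "(\<Prod>k\<in>S. \<bar>?f k\<bar>) > 0"
    by (rule prod_pos) (use ne in auto)
  have "pure d i (d!i) = (-1)^i * prod ?f S" unfolding pure_def S_def using i by simp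
  also have "\<dots> = ((-1)^i * (-1)^i) * (\<Prod>k\<in>S. \<bar>?f k\<bar>)" using eq by simp
  also have "(-1::rat)^i * (-1)^i = 1" by (simp add: power_mult_distrib[symmetric])
  finally show ?thesis using pos by simp
qed

lemma pure_nonneg: "sorted_wrt (<) d \<Longrightarrow> pure d i j \<ge> 0"
  using pure_pos[of d i] by (cases "i < length d \<and> j = d!i") (auto simp: pure_def)


definition chn :: "int list set \<Rightarrow> bool" where
  "chn C \<longleftrightarrow> finite C \<and> (\<forall>d\<in>C. d \<noteq> [] \<and> sorted_wrt (<) d) \<and>
     (\<forall>d\<in>C. \<forall>d'\<in>C. pure_le d d' \<or> pure_le d' d)"

lemma chn_subset: "chn C \<Longrightarrow> C' \<subseteq> C \<Longrightarrow> chn C'"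
  unfolding chn_def by (meson finite_subset subsetD)

lemma pure_le_refl: "pure_le d d" by (simp add: pure_le_def)

lemma pure_le_trans: "pure_le a b \<Longrightarrow> pure_le b c \<Longrightarrow> pure_le a c"
  unfolding pure_le_def by (meson dual_order.trans order_less_le_trans)

lemma chain_min:
  assumes "finite C" "C \<noteq> {}" "\<forall>d\<in>C. \<forall>d'\<in>C. pure_le d d' \<or> pure_le d' d"
  shows "\<exists>d0\<in>C. \<forall>d\<in>C. pure_le d0 d"
  using assms
proof (induction C rule: finite_ne_induct)
  case (singleton x)
  then show ?case by (simp add: pure_le_refl)
next
  case (insert x F)
  then obtain d0 where d0: "d0 \<in> F" "\<forall>d\<in>F. pure_le d0 d" by auto
  show ?case
  proof (cases "pure_le d0 x")
    case True
    then show ?thesis using d0 by auto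
  next
    case False
    then have "pure_le x d0" using insert.prems d0 by auto
    then show ?thesis using d0 pure_le_trans pure_le_refl by blast
  qed
qed

lemma comb_nz:
  assumes "chn C" "\<forall>d\<in>C. lam d > 0"
  shows "comb C lam i j \<noteq> 0 \<longleftrightarrow> (\<exists>d\<in>C. i < length d \<and> j = d!i)"
proof -
  have fin: "finite C" and s: "\<And>d. d \<in> C \<Longrightarrow> sorted_wrt (<) d" using assms(1) by (auto simp: chn_def)
  have nn: "\<And>d. d \<in> C \<Longrightarrow> lam d * pure d i j \<ge> 0"
    using assms(2) pure_nonneg s by (simp add: less_imp_le)
  have z: "\<And>d. d \<in> C \<Longrightarrow> lam d * pure d i j = 0 \<longleftrightarrow> \<not> (i < length d \<and> j = d!i)"
  proof -
    fix d assume d: "d \<in> C"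
    show "lam d * pure d i j = 0 \<longleftrightarrow> \<not> (i < length d \<and> j = d!i)"
    proof (cases "i < length d \<and> j = d!i")
      case True
      then show ?thesis using pure_pos[OF s[OF d], of i] assms(2) d by auto
    next
      case False
      then show ?thesis by (auto simp: pure_def)
    qed
  qed
  have "comb C lam i j = 0 \<longleftrightarrow> (\<forall>d\<in>C. lam d * pure d i j = 0)"
    unfolding comb_def using sum_nonneg_eq_0_iff[OF fin, of "\<lambda>d. lam d * pure d i j"] nn by auto
  then show ?thesis using z by auto
qed

lemma same_min:
  assumes C: "chn C" "\<forall>d\<in>C. lam d > 0" and D: "chn D" "\<forall>d\<in>D. mu d > 0"
    and eq: "comb C lam = comb D mu"
    and d0: "d0 \<in> C" "\<forall>d\<in>C. pure_le d0 d" and e0: "e0 \<in> D" "\<forall>d\<in>D. pure_le e0 d"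
  shows "d0 = e0"
proof -
  have S: "(\<exists>d\<in>C. i < length d \<and> j = d!i) \<longleftrightarrow> (\<exists>d\<in>D. i < length d \<and> j = d!i)" for i j
    using comb_nz[OF C, of i j] comb_nz[OF D, of i j] eq by simp
  have l1: "length e0 \<le> length d0"
  proof (rule ccontr)
    assume "\<not> ?thesis"
    then have "\<exists>d\<in>D. length d0 < length d \<and> e0 ! length d0 = d ! length d0"
      using e0(1) \<open>\<not> length e0 \<le> length d0\<close> by (intro bexI[of _ e0]) auto
    then have "\<exists>d\<in>C. length d0 < length d \<and> e0 ! length d0 = d ! length d0"
      using S by blast
    then show False using d0 by (auto simp: pure_le_def)
  qed
  have l2: "length d0 \<le> length e0"
  proof (rule ccontr)
    assume "\<not> ?thesis"
    then have "\<exists>d\<in>C. length e0 < length d \<and> d0 ! length e0 = d ! length e0"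
      using d0(1) \<open>\<not> length d0 \<le> length e0\<close> by (intro bexI[of _ d0]) auto
    then have "\<exists>d\<in>D. length e0 < length d \<and> d0 ! length e0 = d ! length e0"
      using S by blast
    then show False using e0 by (auto simp: pure_le_def)
  qed
  show ?thesis
  proof (rule nth_equalityI)
    show "length d0 = length e0" using l1 l2 by simp
    fix i assume i: "i < length d0"
    have "\<exists>d\<in>C. i < length d \<and> d0!i = d!i" using d0(1) i by (intro bexI[of _ d0]) auto
    then have "\<exists>d\<in>D. i < length d \<and> d0!i = d!i" using S by blast
    then obtain d where "d \<in> D" "i < length d" "d0!i = d!i" by blast
    then have a: "e0!i \<le> d0!i" using e0(2) by (auto simp: pure_le_def)
    have "\<exists>d\<in>D. i < length d \<and> e0!i = d!i" using e0(1) i l1 l2 by (intro bexI[of _ e0]) auto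
    then have "\<exists>d\<in>C. i < length d \<and> e0!i = d!i" using S by blast
    then obtain d' where "d' \<in> C" "i < length d'" "e0!i = d'!i" by blast
    then have b: "d0!i \<le> e0!i" using d0(2) by (auto simp: pure_le_def)
    show "d0!i = e0!i" using a b by simp
  qed
qed

lemma comb_remove:
  "finite C \<Longrightarrow> d \<in> C \<Longrightarrow> comb (C - {d}) lam = (\<lambda>i j. comb C lam i j - lam d * pure d i j)"
  unfolding comb_def by (simp add: sum.remove)

lemma comb_upd:
  "finite C \<Longrightarrow> d \<in> C \<Longrightarrow> comb C (lam(d := x)) = (\<lambda>i j. comb C lam i j - (lam d - x) * pure d i j)"
proof -
  assume f: "finite C" and d: "d \<in> C"
  have "comb C (lam(d := x)) i j = x * pure d i j + (\<Sum>e\<in>C - {d}. lam e * pure e i j)" for i j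
    unfolding comb_def using sum.remove[OF f d, of "\<lambda>e. (lam(d := x)) e * pure e i j"] by simp
  moreover have "comb C lam i j = lam d * pure d i j + (\<Sum>e\<in>C - {d}. lam e * pure e i j)" for i j
    unfolding comb_def using sum.remove[OF f d] by simp
  ultimately show ?thesis by (auto simp: algebra_simps)
qed

lemma comb_empty: "comb {} lam = (\<lambda>i j. 0)" by (simp add: comb_def)

lemma uniq:
  "chn C \<Longrightarrow> chn D \<Longrightarrow> \<forall>d\<in>C. lam d > 0 \<Longrightarrow> \<forall>d\<in>D. mu d > 0 \<Longrightarrow> comb C lam = comb D mu
   \<Longrightarrow> C = D \<and> (\<forall>d\<in>C. lam d = mu d)"
proof (induction "card C + card D" arbitrary: C D lam mu rule: less_induct)
  case less
  note IH = less.hyps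
  have fC: "finite C" and fD: "finite D" using less.prems by (auto simp: chn_def)
  show ?case
  proof (cases "C = {} \<or> D = {}")
    case True
    { fix A B :: "int list set" and la lb
      assume A: "chn A" "\<forall>d\<in>A. la d > 0" and B: "A = {}" and "chn B" "\<forall>d\<in>B. lb d > 0"
        and e: "comb A la = comb B lb"
      have "B = {}"
      proof (rule ccontr)
        assume "B \<noteq> {}"
        then obtain d where d: "d \<in> B" by auto
        then have "d \<noteq> []" using \<open>chn B\<close> by (auto simp: chn_def)
        then have "comb B lb 0 (d!0) \<noteq> 0" using comb_nz[OF \<open>chn B\<close> \<open>\<forall>d\<in>B. lb d > 0\<close>] d by auto
        moreover have "comb B lb = (\<lambda>i j. 0)" using e B by (simp add: comb_empty)
        then have "comb B lb 0 (d!0) = 0" by simp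
        ultimately show False by simp
      qed }
    note aux = this
    show ?thesis
    proof (cases "C = {}")
      case True
      then have "D = {}" using aux[OF less.prems(1,3) True less.prems(2,4,5)] by simp
      then show ?thesis using True by simp
    next
      case False
      then have "D = {}" using \<open>C = {} \<or> D = {}\<close> by simp
      then have "C = {}" using aux[OF less.prems(2,4) \<open>D = {}\<close> less.prems(1,3) less.prems(5)[symmetric]] by simp
      then show ?thesis using False by simp
    qed
  next
    case False
    have "\<exists>d0\<in>C. \<forall>d\<in>C. pure_le d0 d"
      by (rule chain_min) (use fC False less.prems(1) in \<open>auto simp: chn_def\<close>)
    then obtain d0 where d0: "d0 \<in> C" "\<forall>d\<in>C. pure_le d0 d" by blast
    have "\<exists>d0\<in>D. \<forall>d\<in>D. pure_le d0 d"
      by (rule chain_min) (use fD False less.prems(2) in \<open>auto simp: chn_def\<close>)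
    then obtain e0 where e0: "e0 \<in> D" "\<forall>d\<in>D. pure_le e0 d" by blast
    have "d0 = e0" using same_min[OF less.prems(1,3,2,4,5) d0 e0] .
    then have dC: "d0 \<in> C" and dD: "d0 \<in> D" using d0 e0 by auto
    { fix A B :: "int list set" and la lb
      assume A: "chn A" "\<forall>d\<in>A. la d > 0" and B: "chn B" "\<forall>d\<in>B. lb d > 0"
        and e: "comb A la = comb B lb" and dA: "d0 \<in> A" and dB: "d0 \<in> B" and le: "la d0 \<le> lb d0"
        and card: "card A + card B = card C + card D"
      have fA: "finite A" and fB: "finite B" using A B by (auto simp: chn_def)
      have A': "chn (A - {d0})" using chn_subset A by blast
      have cA: "card (A - {d0}) < card A" using fA dA by (meson card_Diff1_less)
      have cB: "card (B - {d0}) < card B" using fB dB by (meson card_Diff1_less)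
      have eA: "comb (A - {d0}) la = (\<lambda>i j. comb B lb i j - la d0 * pure d0 i j)"
        using comb_remove[OF fA dA] e by simp
      have "A = B \<and> (\<forall>d\<in>A. la d = lb d)"
      proof (cases "la d0 = lb d0")
        case True
        have h1: "comb (A - {d0}) la = comb (B - {d0}) lb"
          using eA comb_remove[OF fB dB] True by simp
        have h2: "card (A - {d0}) + card (B - {d0}) < card C + card D" using cA cB card by linarith
        have h3: "chn (B - {d0})" using chn_subset[OF B(1)] by blast
        have h4: "\<forall>d\<in>A - {d0}. la d > 0" and h5: "\<forall>d\<in>B - {d0}. lb d > 0" using A(2) B(2) by auto
        have "A - {d0} = B - {d0} \<and> (\<forall>d\<in>A - {d0}. la d = lb d)"
          by (rule IH[OF h2 A' h3 h4 h5 h1])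
        then have e1: "A - {d0} = B - {d0}" and e2: "\<forall>d\<in>A - {d0}. la d = lb d" by simp_all
        have "A = B" using e1 dA dB by blast
        moreover have "\<forall>d\<in>A. la d = lb d" using e2 True by blast
        ultimately show ?thesis by simp
      next
        case False
        then have gt: "lb d0 - la d0 > 0" using le by simp
        have g1: "comb (A - {d0}) la = comb B (lb(d0 := lb d0 - la d0))"
          using eA comb_upd[OF fB dB] by simp
        have g2: "\<forall>d\<in>B. (lb(d0 := lb d0 - la d0)) d > 0" using B gt by auto
        have g3: "card (A - {d0}) + card B < card C + card D" using cA card by linarith
        have g4: "\<forall>d\<in>A - {d0}. la d > 0" using A(2) by auto
        have "A - {d0} = B" using IH[OF g3 A' B(1) g4 g2 g1] by simp
        then show ?thesis using dB by auto
      qed }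
    note key = this
    show ?thesis
    proof (cases "lam d0 \<le> mu d0")
      case True
      then show ?thesis using key[OF less.prems(1,3,2,4,5) dC dD] by simp
    next
      case False
      have "D = C \<and> (\<forall>d\<in>D. mu d = lam d)"
        using key[OF less.prems(2,4,1,3) less.prems(5)[symmetric] dD dC] False by (simp add: add.commute)
      then show ?thesis by simp
    qed
  qed
qed

lemma chain_chn:
  assumes "is_chain n M N C" shows "chn C"
proof -
  have sub: "C \<subseteq> {xs. set xs \<subseteq> {M..N + int n} \<and> length xs \<le> n + 1}"
  proof
    fix d assume d: "d \<in> C"
    then have p: "degseq n d" "in_B n M N (pure d)" using assms by (auto simp: is_chain_def pure_in_B_def)
    have "set d \<subseteq> {M..N + int n}"
    proof
      fix x assume "x \<in> set d"
      then obtain i where i: "i < length d" "x = d!i" by (auto simp: in_set_conv_nth)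
      have "pure d i (d!i) \<noteq> 0" using pure_pos[of d i] p i by (auto simp: degseq_def)
      then have "i \<le> n \<and> M + int i \<le> d!i \<and> d!i \<le> N + int i" using p(2) by (auto simp: in_B_def)
      then show "x \<in> {M..N + int n}" using i by auto
    qed
    then show "d \<in> {xs. set xs \<subseteq> {M..N + int n} \<and> length xs \<le> n + 1}"
      using p by (auto simp: degseq_def)
  qed
  have "finite C" by (rule finite_subset[OF sub finite_lists_length_le]) simp
  then show ?thesis using assms
    by (auto simp: chn_def is_chain_def pure_in_B_def degseq_def)
qed


lemma comb_restrict:
  assumes "finite C" "C' \<subseteq> C" "\<forall>d\<in>C - C'. lam d = 0"
  shows "comb C lam = comb C' lam"
  unfolding comb_def
proof (intro ext)
  fix i j
  show "(\<Sum>d\<in>C. lam d * pure d i j) = (\<Sum>d\<in>C'. lam d * pure d i j)"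
    by (rule sum.mono_neutral_right[OF assms(1,2)]) (use assms(3) in auto)
qed

lemma part3:
  assumes "is_chain n M N C" "is_chain n M N D" "\<forall>d\<in>C. lam d > 0" "\<forall>d\<in>D. mu d > 0"
    "comb C lam = comb D mu"
  shows "C = D \<and> (\<forall>d\<in>C. lam d = mu d)"
  by (rule uniq[OF chain_chn[OF assms(1)] chain_chn[OF assms(2)] assms(3,4,5)])

lemma part1:
  assumes ch: "is_chain n M N C" and z: "comb C lam = (\<lambda>i j. 0)"
  shows "\<forall>d\<in>C. lam d = 0"
proof -
  have c: "chn C" by (rule chain_chn[OF ch])
  then have fC: "finite C" by (simp add: chn_def)
  define P where "P = {d\<in>C. lam d > 0}"
  define Q where "Q = {d\<in>C. lam d < 0}"
  have fP: "finite P" and fQ: "finite Q" using fC by (auto simp: P_def Q_def)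
  have "comb C lam = comb (P \<union> Q) lam"
    by (rule comb_restrict[OF fC]) (auto simp: P_def Q_def)
  have eq: "comb P lam = comb Q (\<lambda>d. - lam d)"
  proof (intro ext)
    fix i j
    have "0 = comb C lam i j" using z by simp
    also have "\<dots> = comb (P \<union> Q) lam i j" using \<open>comb C lam = comb (P \<union> Q) lam\<close> by simp
    also have "\<dots> = comb P lam i j + comb Q lam i j"
      unfolding comb_def by (rule sum.union_disjoint[OF fP fQ]) (auto simp: P_def Q_def)
    finally show "comb P lam i j = comb Q (\<lambda>d. - lam d) i j"
      unfolding comb_def by (simp add: sum_negf eq_neg_iff_add_eq_0)
  qed
  have "P = Q \<and> (\<forall>d\<in>P. lam d = - lam d)"
    by (rule uniq[OF chn_subset[OF c] chn_subset[OF c] _ _ eq]) (auto simp: P_def Q_def)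
  then have "P = Q" by simp
  then have "P = {}" by (auto simp: P_def Q_def)
  moreover have "Q = {}" using \<open>P = Q\<close> \<open>P = {}\<close> by simp
  ultimately show ?thesis by (auto simp: P_def Q_def) (meson linorder_neqE)
qed

lemma part2:
  assumes chC: "is_chain n M N C" and chD: "is_chain n M N D"
  shows "cone C \<inter> cone D = cone (C \<inter> D)"
proof
  have cC: "chn C" and cD: "chn D" using chain_chn chC chD by auto
  have fC: "finite C" and fD: "finite D" using cC cD by (auto simp: chn_def)
  show "cone (C \<inter> D) \<subseteq> cone C \<inter> cone D"
  proof
    fix x assume "x \<in> cone (C \<inter> D)"
    then obtain lam where x: "x = comb (C \<inter> D) lam" and nn: "\<forall>d\<in>C \<inter> D. lam d \<ge> 0"
      by (auto simp: cone_def)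
    define lam' where "lam' = (\<lambda>d. if d \<in> C \<inter> D then lam d else 0)"
    have "comb (C \<inter> D) lam = comb (C \<inter> D) lam'"
      unfolding comb_def lam'_def by simp
    moreover have "comb C lam' = comb (C \<inter> D) lam'"
      by (rule comb_restrict[OF fC]) (auto simp: lam'_def)
    moreover have "comb D lam' = comb (C \<inter> D) lam'"
      by (rule comb_restrict[OF fD]) (auto simp: lam'_def)
    moreover have "\<forall>d. lam' d \<ge> 0" using nn by (auto simp: lam'_def)
    ultimately have "x = comb C lam'" "x = comb D lam'" "\<forall>d. lam' d \<ge> 0" using x by simp_all
    then show "x \<in> cone C \<inter> cone D" unfolding cone_def by blast
  qed
  show "cone C \<inter> cone D \<subseteq> cone (C \<inter> D)"
  proof
    fix x assume "x \<in> cone C \<inter> cone D"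
    then have "x \<in> cone C" "x \<in> cone D" by auto
    then obtain lam mu where xl: "x = comb C lam" and nl: "\<forall>d\<in>C. lam d \<ge> 0"
      and xm: "x = comb D mu" and nm: "\<forall>d\<in>D. mu d \<ge> 0"
      unfolding cone_def by blast
    define C' where "C' = {d\<in>C. lam d > 0}"
    define D' where "D' = {d\<in>D. mu d > 0}"
    have e1: "comb C lam = comb C' lam"
      by (rule comb_restrict[OF fC]) (use nl in \<open>auto simp: C'_def\<close>)
    have e2: "comb D mu = comb D' mu"
      by (rule comb_restrict[OF fD]) (use nm in \<open>auto simp: D'_def\<close>)
    have "C' = D' \<and> (\<forall>d\<in>C'. lam d = mu d)"
      by (rule uniq[OF chn_subset[OF cC] chn_subset[OF cD]]) (use e1 e2 xl xm in \<open>auto simp: C'_def D'_def\<close>)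
    then have "C' \<subseteq> C \<inter> D" by (auto simp: C'_def D'_def)
    have "comb (C \<inter> D) lam = comb C' lam"
      by (rule comb_restrict) (use fC \<open>C' \<subseteq> C \<inter> D\<close> nl in \<open>auto simp: C'_def\<close>)
    then have "x = comb (C \<inter> D) lam" using xl e1 by simp
    then show "x \<in> cone (C \<inter> D)" using nl unfolding cone_def by auto
  qed
qed

theorem proposition3p1:
  fixes n :: nat and M N :: int
  assumes "n \<ge> 1" and "M \<le> N"
  shows
    \<comment> \<open>each cone is simplicial: the generators are linearly independent\<close>
    "(\<forall>C lam. is_chain n M N C \<longrightarrow> comb C lam = (\<lambda>i j. 0) \<longrightarrow> (\<forall>d \<in> C. lam d = 0))
     \<comment> \<open>the intersection of two cones is the common face\<close>
   \<and> (\<forall>C D. is_chain n M N C \<longrightarrow> is_chain n M N D \<longrightarrow> cone C \<inter> cone D = cone (C \<inter> D))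
     \<comment> \<open>uniqueness of positive chain decompositions\<close>
   \<and> (\<forall>C D lam mu. is_chain n M N C \<longrightarrow> is_chain n M N D \<longrightarrow>
        (\<forall>d \<in> C. lam d > 0) \<longrightarrow> (\<forall>d \<in> D. mu d > 0) \<longrightarrow> comb C lam = comb D mu \<longrightarrow>
        C = D \<and> (\<forall>d \<in> C. lam d = mu d))"
proof (intro conjI allI impI)
  fix C lam assume "is_chain n M N C" "comb C lam = (\<lambda>i j. 0)"
  then show "\<forall>d\<in>C. lam d = 0" by (rule part1)
next
  fix C D assume "is_chain n M N C" "is_chain n M N D"
  then show "cone C \<inter> cone D = cone (C \<inter> D)" by (rule part2)
next
  fix C D lam mu assume a: "is_chain n M N C" "is_chain n M N D" "\<forall>d\<in>C. lam d > 0"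
    "\<forall>d\<in>D. mu d > 0" "comb C lam = comb D mu"
  show "C = D" using part3[OF a] by (rule conjunct1)
  show "\<forall>d\<in>C. lam d = mu d" using part3[OF a] by (rule conjunct2)
qed

end
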